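(* Let $\Phi:\mathbb{R}^N\to\mathbb{R}^M$ and $L:\mathbb{R}^P\to\mathbb{R}^N$ be linear operators, let $\|\cdot\|_A$ be a norm on $\mathbb{R}^P$ with dual norm $\|\cdot\|_A^*$, and set $R(x)=\|L^*x\|_A$. Let $x_0\in\mathbb{R}^N$, and assume $\|\cdot\|_A$ is decomposable at $u_0=L^*x_0$ with associated subspace $T_0$ and vector $e_0\in T_0$; let $S_0=T_0^\perp$. Assume there exist $\eta\in\mathbb{R}^M$ and $\alpha\in\partial\|\cdot\|_A(L^*x_0)$ with $\Phi^*\eta=L\alpha$ and $\|\alpha_{S_0}\|_A^*<1$, and that $\Phi$ is injective on $\ker(L_{S_0}^* )$. Then there exist constants $C_1>0$, $C_2>0$, independent of $\eta$ and $\alpha$, such that the following holds: for every $\varepsilon>0$, every $w\in\mathbb{R}^M$ with $\|w\|_2\le\varepsilon$, $y=\Phi x_0+w$, every $c>0$ and $\lambda=c\varepsilon$, any minimizer $x^\star$ of $\min_{x\in\mathbb{R}^N}\tfrac12\|y-\Phi x\|_2^2+\lambda R(x)$ satisfies $$\|x^\star-x_0\|_2\le C\varepsilon,\qquad C=C_1\bigl(2+c\|\eta\|_2\bigr)+C_2\frac{(1+c\|\eta\|_2/2)^2}{c\,(1-\|\alpha_{S_0}\|_A^* )}.$$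
   Context: For a subspace $V\subset\mathbb{R}^P$, $P_V$ denotes the orthogonal projector onto $V$, and $L_V=LP_V$, $L_V^*=P_VL^*$, $\alpha_V=P_V\alpha$ for $\alpha\in\mathbb{R}^P$. A norm $\|\cdot\|_A$ on $\mathbb{R}^P$ is decomposable at $u\in\mathbb{R}^P$ if (i) there exist a subspace $T\subset\mathbb{R}^P$ and a vector $e\in T$ such that $\partial\|\cdot\|_A(u)=\{\alpha\in\mathbb{R}^P:\ \alpha_T=e,\ \|\alpha_{T^\perp}\|_A^*\le 1\}$, and (ii) for every $z\in T^\perp$, $\|z\|_A=\sup\{\langle v,z\rangle: v\in T^\perp,\ \|v\|_A^*\le 1\}$. *)

theory Defs
  imports "HOL-Analysis.Analysis"
begin

definition proj :: "'a::euclidean_space set \<Rightarrow> 'a \<Rightarrow> 'a" where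
  "proj V x = (THE v. v \<in> V \<and> (\<forall>y\<in>V. orthogonal (x - v) y))"

definition is_norm :: "('a::real_vector \<Rightarrow> real) \<Rightarrow> bool" where
  "is_norm nA \<longleftrightarrow> (\<forall>x. 0 \<le> nA x) \<and> (\<forall>x. nA x = 0 \<longleftrightarrow> x = 0)
     \<and> (\<forall>c x. nA (c *\<^sub>R x) = \<bar>c\<bar> * nA x) \<and> (\<forall>x y. nA (x + y) \<le> nA x + nA y)"

definition dual_norm :: "('a::real_inner \<Rightarrow> real) \<Rightarrow> 'a \<Rightarrow> real" where
  "dual_norm nA v = Sup {v \<bullet> z | z. nA z \<le> 1}"

definition subdiff :: "('a::real_inner \<Rightarrow> real) \<Rightarrow> 'a \<Rightarrow> 'a set" where
  "subdiff f u = {a. \<forall>z. f u + a \<bullet> (z - u) \<le> f z}"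

definition decomposable_at :: "('a::euclidean_space \<Rightarrow> real) \<Rightarrow> 'a \<Rightarrow> 'a set \<Rightarrow> 'a \<Rightarrow> bool" where
  "decomposable_at nA u T e \<longleftrightarrow> subspace T \<and> e \<in> T
     \<and> subdiff nA u = {a. proj T a = e \<and> dual_norm nA (proj (orthogonal_comp T) a) \<le> 1}
     \<and> (\<forall>z \<in> orthogonal_comp T.
          nA z = Sup {v \<bullet> z | v. v \<in> orthogonal_comp T \<and> dual_norm nA v \<le> 1})"

end

theory Submission
  imports Defs
begin

lemma proj_unique:
  fixes V :: "'a::euclidean_space set"
  assumes "subspace V" "v \<in> V" "\<forall>y\<in>V. orthogonal (x - v) y"
  shows "proj V x = v"
  unfolding proj_def
proof (rule the_equality)
  show "v \<in> V \<and> (\<forall>y\<in>V. orthogonal (x - v) y)" using assms(2,3) by (rule conjI)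
next
  fix v' assume h: "v' \<in> V \<and> (\<forall>y\<in>V. orthogonal (x - v') y)"
  have d: "v - v' \<in> V" using assms(1,2) conjunct1[OF h] by (rule subspace_diff)
  have h2: "(x - v') \<bullet> (v - v') = 0" using conjunct2[OF h] d unfolding orthogonal_def by blast
  have h3: "(x - v) \<bullet> (v - v') = 0" using assms(3) d unfolding orthogonal_def by blast
  have e: "(x - v') - (x - v) = v - v'" by simp
  have "(v - v') \<bullet> (v - v') = ((x - v') - (x - v)) \<bullet> (v - v')" by (simp only: e)
  also have "\<dots> = 0" by (simp only: inner_diff_left[of "x - v'" "x - v"] h2 h3 diff_self)
  finally show "v' = v" by simp
qed

lemma proj_char:
  fixes V :: "'a::euclidean_space set"
  assumes "subspace V"
  shows "proj V x \<in> V \<and> (\<forall>y\<in>V. orthogonal (x - proj V x) y)"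
proof -
  obtain y z where "y \<in> span V" "\<And>w. w \<in> span V \<Longrightarrow> orthogonal z w" "x = y + z"
    using orthogonal_subspace_decomp_exists by blast
  moreover have "span V = V" using assms by simp
  ultimately have "y \<in> V" "\<forall>w\<in>V. orthogonal (x - y) w" by auto
  then show ?thesis using proj_unique[OF assms] by simp
qed

lemma proj_linear:
  fixes V :: "'a::euclidean_space set"
  assumes "subspace V"
  shows "linear (proj V)"
proof (rule linearI)
  fix a b
  have pa: "proj V a \<in> V" "\<forall>y\<in>V. orthogonal (a - proj V a) y" using proj_char[OF assms, of a] by auto
  have pb: "proj V b \<in> V" "\<forall>y\<in>V. orthogonal (b - proj V b) y" using proj_char[OF assms, of b] by auto
  show "proj V (a + b) = proj V a + proj V b"
  proof (rule proj_unique[OF assms])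
    show "proj V a + proj V b \<in> V" using pa(1) pb(1) by (rule subspace_add[OF assms])
    show "\<forall>y\<in>V. orthogonal (a + b - (proj V a + proj V b)) y"
    proof
      fix y assume y: "y \<in> V"
      have e: "a + b - (proj V a + proj V b) = (a - proj V a) + (b - proj V b)" by simp
      have "(a - proj V a) \<bullet> y = 0" "(b - proj V b) \<bullet> y = 0"
        using pa(2) pb(2) y unfolding orthogonal_def by auto
      then show "orthogonal (a + b - (proj V a + proj V b)) y"
        unfolding e orthogonal_def inner_add_left by simp
    qed
  qed
next
  fix c :: real and a
  have pa: "proj V a \<in> V" "\<forall>y\<in>V. orthogonal (a - proj V a) y" using proj_char[OF assms, of a] by auto
  show "proj V (c *\<^sub>R a) = c *\<^sub>R proj V a"
  proof (rule proj_unique[OF assms])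
    show "c *\<^sub>R proj V a \<in> V" using pa(1) by (rule subspace_scale[OF assms])
    show "\<forall>y\<in>V. orthogonal (c *\<^sub>R a - c *\<^sub>R proj V a) y"
    proof
      fix y assume y: "y \<in> V"
      have e: "c *\<^sub>R a - c *\<^sub>R proj V a = c *\<^sub>R (a - proj V a)" by (simp add: scaleR_right_diff_distrib)
      have "(a - proj V a) \<bullet> y = 0" using pa(2) y unfolding orthogonal_def by auto
      then show "orthogonal (c *\<^sub>R a - c *\<^sub>R proj V a) y"
        unfolding e orthogonal_def inner_scaleR_left by simp
    qed
  qed
qed

lemma proj_inner:
  fixes V :: "'a::euclidean_space set"
  assumes "subspace V" "s \<in> V"
  shows "s \<bullet> x = s \<bullet> proj V x"
proof -
  have "orthogonal (x - proj V x) s" using proj_char[OF assms(1)] assms(2) by blast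
  then show ?thesis by (simp add: orthogonal_def inner_diff_left inner_diff_right inner_commute)
qed

lemma isn:
  assumes "is_norm nA"
  shows "nA 0 = 0" "\<And>x. 0 \<le> nA x" "\<And>x. nA x = 0 \<longleftrightarrow> x = 0" "\<And>c x. nA (c *\<^sub>R x) = \<bar>c\<bar> * nA x"
    "\<And>x y. nA (x + y) \<le> nA x + nA y"
proof -
  have all: "(\<forall>x. 0 \<le> nA x) \<and> (\<forall>x. nA x = 0 \<longleftrightarrow> x = 0)
     \<and> (\<forall>c x. nA (c *\<^sub>R x) = \<bar>c\<bar> * nA x) \<and> (\<forall>x y. nA (x + y) \<le> nA x + nA y)"
    using assms unfolding is_norm_def .
  then show "nA 0 = 0" by blast
  show "\<And>x. nA x = 0 \<longleftrightarrow> x = 0" using all by blast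
  show "\<And>x. 0 \<le> nA x" using all by blast
  show "\<And>c x. nA (c *\<^sub>R x) = \<bar>c\<bar> * nA x" using all by blast
  show "\<And>x y. nA (x + y) \<le> nA x + nA y" using all by blast
qed

lemma nA_sum:
  assumes "is_norm nA" "finite A"
  shows "nA (sum f A) \<le> (\<Sum>i\<in>A. nA (f i))"
  using assms(2)
proof (induction A rule: finite_induct)
  case empty then show ?case using isn(1)[OF assms(1)] by simp
next
  case (insert x F)
  then show ?case using isn(5)[OF assms(1), of "f x" "sum f F"] by simp
qed

lemma nA_upper:
  fixes nA :: "'a::euclidean_space \<Rightarrow> real"
  assumes "is_norm nA"
  shows "\<exists>M>0. \<forall>x. nA x \<le> M * norm x"
proof -
  define M where "M = 1 + (\<Sum>b\<in>Basis. nA b)"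
  have Mp: "M > 0" unfolding M_def using isn(2)[OF assms] by (simp add: sum_nonneg add_pos_nonneg)
  have "nA x \<le> M * norm x" for x
  proof -
    have "nA x = nA (\<Sum>b\<in>Basis. (x \<bullet> b) *\<^sub>R b)" by (simp add: euclidean_representation)
    also have "\<dots> \<le> (\<Sum>b\<in>Basis. nA ((x \<bullet> b) *\<^sub>R b))" by (rule nA_sum[OF assms]) simp
    also have "\<dots> = (\<Sum>b\<in>Basis. \<bar>x \<bullet> b\<bar> * nA b)" using isn(4)[OF assms] by simp
    also have "\<dots> \<le> (\<Sum>b\<in>Basis. norm x * nA b)"
      by (intro sum_mono mult_right_mono Basis_le_norm isn(2)[OF assms])
    also have "\<dots> = norm x * (\<Sum>b\<in>Basis. nA b)" by (simp add: sum_distrib_left)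
    also have "\<dots> \<le> M * norm x" unfolding M_def by (simp add: algebra_simps)
    finally show ?thesis .
  qed
  then show ?thesis using Mp by blast
qed

lemma nA_lower:
  fixes nA :: "'a::euclidean_space \<Rightarrow> real"
  assumes "is_norm nA"
  shows "\<exists>k>0. \<forall>x. k * norm x \<le> nA x"
proof -
  obtain M where M: "M > 0" "\<And>x. nA x \<le> M * norm x" using nA_upper[OF assms] by blast
  have neg: "nA (- x) = nA x" for x using isn(4)[OF assms, of "-1" x] by simp
  have lip: "M-lipschitz_on UNIV nA"
  proof (rule lipschitz_onI)
    fix x y :: 'a
    have "nA x \<le> nA (x - y) + nA y" using isn(5)[OF assms, of "x - y" y] by simp
    moreover have "nA y \<le> nA (y - x) + nA x" using isn(5)[OF assms, of "y - x" x] by simp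
    moreover have "nA (y - x) = nA (x - y)" using neg[of "x - y"] by simp
    moreover have "nA (x - y) \<le> M * dist x y" using M(2) by (simp add: dist_norm)
    ultimately show "dist (nA x) (nA y) \<le> M * dist x y" by (simp add: dist_real_def abs_le_iff)
  qed (use M in auto)
  have "continuous_on UNIV nA" by (rule lipschitz_on_continuous_on[OF lip])
  then have cont: "continuous_on (sphere 0 1) nA" by (rule continuous_on_subset) simp
  obtain b :: 'a where "b \<in> Basis" using nonempty_Basis by blast
  then have "b \<in> sphere 0 1" by simp
  then have ne: "sphere (0::'a) 1 \<noteq> {}" by blast
  obtain x0 where x0: "x0 \<in> sphere (0::'a) 1" "\<forall>y\<in>sphere 0 1. nA x0 \<le> nA y"
    using continuous_attains_inf[OF compact_sphere ne cont] by blast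
  have x0ne: "x0 \<noteq> 0" using x0(1) by auto
  have kp: "nA x0 > 0" using isn(2,3)[OF assms, of x0] x0ne by linarith
  have "nA x0 * norm x \<le> nA x" for x
  proof (cases "x = 0")
    case True then show ?thesis using isn(1)[OF assms] by simp
  next
    case False
    then have "x /\<^sub>R norm x \<in> sphere 0 1" by simp
    then have "nA x0 \<le> nA (x /\<^sub>R norm x)" using x0 by blast
    also have "\<dots> = \<bar>inverse (norm x)\<bar> * nA x" by (rule isn(4)[OF assms])
    also have "\<dots> = inverse (norm x) * nA x" by simp
    finally have "nA x0 \<le> inverse (norm x) * nA x" .
    then have "nA x0 * norm x \<le> (inverse (norm x) * nA x) * norm x" by (rule mult_right_mono) simp
    also have "\<dots> = nA x" using False by simp
    finally show ?thesis .
  qed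
  then show ?thesis using kp by blast
qed


lemma dual_bdd:
  fixes nA :: "'a::euclidean_space \<Rightarrow> real"
  assumes "k > 0" "\<And>x. k * norm x \<le> nA x"
  shows "bdd_above {v \<bullet> z | z. nA z \<le> 1}"
proof (rule bdd_aboveI)
  fix t assume "t \<in> {v \<bullet> z | z. nA z \<le> 1}"
  then obtain z where z: "t = v \<bullet> z" "nA z \<le> 1" by blast
  have "k * norm z \<le> 1" using assms(2)[of z] z(2) by linarith
  then have nz: "norm z \<le> 1 / k" using assms(1) by (simp add: field_simps)
  have "t \<le> norm v * norm z" using z(1) norm_cauchy_schwarz by simp
  also have "\<dots> \<le> norm v * (1 / k)" using nz by (intro mult_left_mono) auto
  finally show "t \<le> norm v / k" by simp
qed

lemma dual_le:
  fixes nA :: "'a::euclidean_space \<Rightarrow> real"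
  assumes "k > 0" "\<And>x. k * norm x \<le> nA x" "is_norm nA"
  shows "dual_norm nA v \<le> norm v / k"
  unfolding dual_norm_def
proof (rule cSup_least)
  have "v \<bullet> 0 \<in> {v \<bullet> z | z. nA z \<le> 1}"
    unfolding mem_Collect_eq by (rule exI[of _ 0]) (simp add: isn(1)[OF assms(3)])
  then show "{v \<bullet> z | z. nA z \<le> 1} \<noteq> {}" by blast
next
  fix t assume "t \<in> {v \<bullet> z | z. nA z \<le> 1}"
  then obtain z where z: "t = v \<bullet> z" "nA z \<le> 1" by blast
  have "k * norm z \<le> 1" using assms(2)[of z] z(2) by linarith
  then have nz: "norm z \<le> 1 / k" using assms(1) by (simp add: field_simps)
  have "t \<le> norm v * norm z" using z(1) norm_cauchy_schwarz by simp
  also have "\<dots> \<le> norm v * (1 / k)" using nz by (intro mult_left_mono) auto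
  finally show "t \<le> norm v / k" by simp
qed

lemma dual_ineq:
  fixes nA :: "'a::euclidean_space \<Rightarrow> real"
  assumes "k > 0" "\<And>x. k * norm x \<le> nA x" "is_norm nA"
  shows "v \<bullet> z \<le> dual_norm nA v * nA z"
proof (cases "z = 0")
  case True then show ?thesis using isn(1)[OF assms(3)] by simp
next
  case False
  then have p: "nA z > 0" using isn(2,3)[OF assms(3), of z] by linarith
  have "nA (z /\<^sub>R nA z) = 1" using isn(4)[OF assms(3)] p by simp
  then have "v \<bullet> (z /\<^sub>R nA z) \<in> {v \<bullet> z | z. nA z \<le> 1}"
    unfolding mem_Collect_eq by (intro exI[of _ "z /\<^sub>R nA z"]) simp
  then have "v \<bullet> (z /\<^sub>R nA z) \<le> dual_norm nA v"
    unfolding dual_norm_def by (rule cSup_upper[OF _ dual_bdd[OF assms(1,2)]])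
  then have "(v \<bullet> z) / nA z \<le> dual_norm nA v" by (simp add: divide_inverse_commute)
  then show ?thesis using p by (simp add: pos_divide_le_eq)
qed


theorem theorem2:
  fixes \<Phi> :: "real^'n \<Rightarrow> real^'m" and L :: "real^'p \<Rightarrow> real^'n"
    and nA :: "real^'p \<Rightarrow> real" and x0 :: "real^'n"
    and T0 :: "(real^'p) set" and e0 :: "real^'p"
  assumes "linear \<Phi>" and "linear L" and "is_norm nA"
    and "decomposable_at nA (adjoint L x0) T0 e0"
    and "\<exists>\<eta> \<alpha>. \<alpha> \<in> subdiff nA (adjoint L x0) \<and> adjoint \<Phi> \<eta> = L \<alpha>
              \<and> dual_norm nA (proj (orthogonal_comp T0) \<alpha>) < 1"
    and "inj_on \<Phi> {x. proj (orthogonal_comp T0) (adjoint L x) = 0}"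
  shows "\<exists>C1>0. \<exists>C2>0. \<forall>\<eta> \<alpha>.
     \<alpha> \<in> subdiff nA (adjoint L x0) \<and> adjoint \<Phi> \<eta> = L \<alpha>
       \<and> dual_norm nA (proj (orthogonal_comp T0) \<alpha>) < 1 \<longrightarrow>
     (\<forall>\<epsilon> > 0. \<forall>w c xs. norm w \<le> \<epsilon> \<and> c > 0 \<and>
        (\<forall>x. (1/2) * (norm (\<Phi> x0 + w - \<Phi> xs))\<^sup>2 + (c * \<epsilon>) * nA (adjoint L xs)
             \<le> (1/2) * (norm (\<Phi> x0 + w - \<Phi> x))\<^sup>2 + (c * \<epsilon>) * nA (adjoint L x)) \<longrightarrow>
        norm (xs - x0) \<le>
          (C1 * (2 + c * norm \<eta>)
           + C2 * (1 + c * norm \<eta> / 2)\<^sup>2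
                  / (c * (1 - dual_norm nA (proj (orthogonal_comp T0) \<alpha>)))) * \<epsilon>)"
proof -
  note nrm = assms(3)
  obtain k where k: "k > 0" "\<And>x. k * norm x \<le> nA x" using nA_lower[OF nrm] by blast
  define S where "S = orthogonal_comp T0"
  have subS: "subspace S" unfolding S_def by (rule subspace_orthogonal_comp)
  define u0 where "u0 = adjoint L x0"
  have subT: "subspace T0" and e0T: "e0 \<in> T0"
    and sd: "subdiff nA u0 = {a. proj T0 a = e0 \<and> dual_norm nA (proj S a) \<le> 1}"
    and dec2: "\<forall>z\<in>S. nA z = Sup {v \<bullet> z | v. v \<in> S \<and> dual_norm nA v \<le> 1}"
    using assms(4) unfolding decomposable_at_def S_def u0_def by auto
  have sub_eq: "a \<bullet> u0 = nA u0" if "a \<in> subdiff nA u0" for a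
  proof -
    have "nA u0 + a \<bullet> (0 - u0) \<le> nA 0" "nA u0 + a \<bullet> ((u0 + u0) - u0) \<le> nA (u0 + u0)"
      using that unfolding subdiff_def by blast+
    moreover have "nA (u0 + u0) \<le> nA u0 + nA u0" by (rule isn(5)[OF nrm])
    ultimately show ?thesis using isn(1)[OF nrm] by (simp add: inner_diff_right)
  qed
  have inS: "v \<in> S \<Longrightarrow> y \<in> T0 \<Longrightarrow> orthogonal v y" for v y
    unfolding S_def orthogonal_comp_def by (auto simp: orthogonal_commute)
  have mk_sub: "e0 + v \<in> subdiff nA u0" if "v \<in> S" "dual_norm nA v \<le> 1" for v
  proof -
    have "proj T0 (e0 + v) = e0"
      by (rule proj_unique[OF subT e0T]) (use that inS in auto)
    moreover have "proj S (e0 + v) = v"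
      by (rule proj_unique[OF subS that(1)]) (use e0T inS in \<open>auto simp: orthogonal_commute\<close>)
    ultimately show ?thesis using sd that by auto
  qed
  have projS_sub: "proj S a = a - e0" if "a \<in> subdiff nA u0" for a
  proof -
    have pa: "proj T0 a = e0" using sd that by auto
    have "a - e0 \<in> S"
      using proj_char[OF subT, of a] pa unfolding S_def orthogonal_comp_def
      by (auto simp: orthogonal_commute)
    then show ?thesis
      by (rule proj_unique[OF subS]) (use e0T inS in \<open>auto simp: orthogonal_commute\<close>)
  qed
  have dual0: "dual_norm nA 0 \<le> 1" using dual_le[OF k nrm, of 0] by simp
  have zS: "(0::real^'p) \<in> S" using subS subspace_0 by blast
  have Pu0: "proj S u0 = 0"
  proof (rule ccontr)
    define w0 where "w0 = proj S u0"
    assume "proj S u0 \<noteq> 0"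
    then have nw: "norm w0 > 0" unfolding w0_def by simp
    define v where "v = (k / norm w0) *\<^sub>R w0"
    have w0S: "w0 \<in> S" unfolding w0_def using proj_char[OF subS] by blast
    have vS: "v \<in> S" unfolding v_def using subspace_scale[OF subS w0S] .
    have "norm v = k" unfolding v_def using nw k(1) by simp
    then have "dual_norm nA v \<le> 1" using dual_le[OF k nrm, of v] k(1) by simp
    then have "(e0 + v) \<bullet> u0 = nA u0" "(e0 + 0) \<bullet> u0 = nA u0"
      using sub_eq mk_sub vS zS dual0 by blast+
    then have "v \<bullet> u0 = 0" by (simp add: inner_add_left)
    moreover have "v \<bullet> u0 = v \<bullet> w0" unfolding w0_def by (rule proj_inner[OF subS vS])
    moreover have "v \<bullet> w0 = k * norm w0" unfolding v_def using nw
      by (simp add: power2_norm_eq_inner[symmetric] power2_eq_square)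
    ultimately show False using nw k(1) by simp
  qed
  define Q where "Q = proj S \<circ> adjoint L"
  have linQ: "linear Q" unfolding Q_def
    by (intro linear_compose adjoint_linear assms(2) proj_linear subS)
  have Qx0: "Q x0 = 0" unfolding Q_def using Pu0 by (simp add: u0_def)
  define F where "F x = (\<Phi> x, Q x)" for x
  have linF: "linear F" unfolding F_def
    using linear_add[OF assms(1)] linear_add[OF linQ] linear_scale[OF assms(1)] linear_scale[OF linQ]
    by (intro linearI) auto
  have injF: "inj F"
  proof (rule injI)
    fix x y assume "F x = F y"
    then have "\<Phi> x = \<Phi> y" "Q x = Q y" unfolding F_def by auto
    then have "\<Phi> (x - y) = \<Phi> 0" "Q (x - y) = 0"
      using linear_diff[OF assms(1)] linear_diff[OF linQ] linear_0[OF assms(1)] by auto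
    moreover have "{x. proj (orthogonal_comp T0) (adjoint L x) = 0} = {x. Q x = 0}"
      unfolding Q_def S_def by simp
    ultimately have "x - y = 0" using assms(6) linear_0[OF linQ]
      unfolding inj_on_def by blast
    then show "x = y" by simp
  qed
  obtain B where B: "B > 0" "\<And>x. B * norm x \<le> norm (F x)"
    using linear_inj_bounded_below_pos[OF linF injF] by blast
  have Bb: "B * norm x \<le> norm (\<Phi> x) + norm (Q x)" for x
    using B(2)[of x] norm_Pair_le[of "\<Phi> x" "Q x"] unfolding F_def by linarith
  have mainB: "\<forall>\<eta> \<alpha>.
     \<alpha> \<in> subdiff nA (adjoint L x0) \<and> adjoint \<Phi> \<eta> = L \<alpha>
       \<and> dual_norm nA (proj (orthogonal_comp T0) \<alpha>) < 1 \<longrightarrow>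
     (\<forall>\<epsilon> > 0. \<forall>w c xs. norm w \<le> \<epsilon> \<and> c > 0 \<and>
        (\<forall>x. (1/2) * (norm (\<Phi> x0 + w - \<Phi> xs))\<^sup>2 + (c * \<epsilon>) * nA (adjoint L xs)
             \<le> (1/2) * (norm (\<Phi> x0 + w - \<Phi> x))\<^sup>2 + (c * \<epsilon>) * nA (adjoint L x)) \<longrightarrow>
        norm (xs - x0) \<le>
          (2 / B * (2 + c * norm \<eta>)
           + 2 / (B * k) * (1 + c * norm \<eta> / 2)\<^sup>2
                  / (c * (1 - dual_norm nA (proj (orthogonal_comp T0) \<alpha>)))) * \<epsilon>)"
  proof (intro allI impI)
    fix \<eta> \<alpha> \<epsilon> w c xs
    assume H1: "\<alpha> \<in> subdiff nA (adjoint L x0) \<and> adjoint \<Phi> \<eta> = L \<alpha>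
       \<and> dual_norm nA (proj (orthogonal_comp T0) \<alpha>) < 1"
      and eps: "\<epsilon> > 0"
      and H2: "norm w \<le> \<epsilon> \<and> c > 0 \<and>
        (\<forall>x. (1/2) * (norm (\<Phi> x0 + w - \<Phi> xs))\<^sup>2 + (c * \<epsilon>) * nA (adjoint L xs)
             \<le> (1/2) * (norm (\<Phi> x0 + w - \<Phi> x))\<^sup>2 + (c * \<epsilon>) * nA (adjoint L x))"
    define \<delta> where "\<delta> = dual_norm nA (proj S \<alpha>)"
    have aS: "\<alpha> \<in> subdiff nA u0" and eta: "adjoint \<Phi> \<eta> = L \<alpha>" and dl: "\<delta> < 1"
      using H1 unfolding u0_def \<delta>_def S_def by auto
    have wle: "norm w \<le> \<epsilon>" and cp: "c > 0" using H2 by auto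
    define lam where "lam = c * \<epsilon>"
    have lamp: "lam > 0" unfolding lam_def using cp eps by simp
    define h where "h = xs - x0"
    define z where "z = adjoint L xs"
    define a where "a = norm (\<Phi> h)"
    define n where "n = norm \<eta>"
    define N where "N = nA (Q h)"
    define E where "E = nA z - \<alpha> \<bullet> z"
    have min0: "(1/2) * (norm (\<Phi> x0 + w - \<Phi> xs))\<^sup>2 + lam * nA z
             \<le> (1/2) * (norm (\<Phi> x0 + w - \<Phi> x0))\<^sup>2 + lam * nA u0"
      using H2 unfolding lam_def z_def u0_def by blast
    have eqd: "\<Phi> x0 + w - \<Phi> xs = w - \<Phi> h" unfolding h_def using linear_diff[OF assms(1)] by simp
    have min1: "(1/2) * (norm (w - \<Phi> h))\<^sup>2 + lam * nA z \<le> (1/2) * (norm w)\<^sup>2 + lam * nA u0"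
      using min0[unfolded eqd] by simp
    have sq: "(norm (w - \<Phi> h))\<^sup>2 = (norm w)\<^sup>2 - 2 * (w \<bullet> \<Phi> h) + a\<^sup>2"
      unfolding a_def by (simp add: power2_norm_eq_inner inner_diff_left inner_diff_right inner_commute)
    have QhS: "Q h = proj S z"
    proof -
      have "Q xs = Q h + Q x0" unfolding h_def using linear_diff[OF linQ] by simp
      then show ?thesis using Qx0 unfolding Q_def z_def by simp
    qed
    have "\<alpha> \<bullet> z - \<alpha> \<bullet> u0 = \<alpha> \<bullet> adjoint L h"
      unfolding z_def u0_def h_def using linear_diff[OF adjoint_linear[OF assms(2)]]
      by (simp add: inner_diff_right)
    also have "\<dots> = L \<alpha> \<bullet> h" by (rule adjoint_works[OF assms(2)])
    also have "\<dots> = \<eta> \<bullet> \<Phi> h" using adjoint_clauses(2)[OF assms(1)] eta by metis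
    finally have key: "\<alpha> \<bullet> u0 = \<alpha> \<bullet> z - \<eta> \<bullet> \<Phi> h" by simp
    have nu0: "nA u0 = \<alpha> \<bullet> z - \<eta> \<bullet> \<Phi> h" using sub_eq[OF aS] key by simp
    have Elow: "(1 - \<delta>) * N \<le> E"
    proof -
      have zS: "proj S z \<in> S" using proj_char[OF subS] by blast
      have pa: "proj S \<alpha> \<in> S" using proj_char[OF subS] by blast
      have bnd: "v \<bullet> proj S z \<le> E + \<delta> * N" if "v \<in> S" "dual_norm nA v \<le> 1" for v
      proof -
        have s: "e0 + v \<in> subdiff nA u0" using mk_sub that by blast
        then have "nA u0 + (e0 + v) \<bullet> (z - u0) \<le> nA z" unfolding subdiff_def by blast
        then have "(e0 + v) \<bullet> z \<le> nA z" using sub_eq[OF s] by (simp add: inner_diff_right)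
        moreover obtain p where p: "p = proj S \<alpha>" by blast
        moreover have "\<alpha> = e0 + p" using projS_sub[OF aS] p by simp
        ultimately have "(v - p) \<bullet> z \<le> E"
          unfolding E_def by (simp add: inner_diff_left inner_add_left)
        then have "(v - proj S \<alpha>) \<bullet> z \<le> E" using p by simp
        moreover have "(v - proj S \<alpha>) \<bullet> z = (v - proj S \<alpha>) \<bullet> proj S z"
          by (rule proj_inner[OF subS]) (use subspace_diff[OF subS that(1) pa] in simp)
        moreover have "proj S \<alpha> \<bullet> proj S z \<le> \<delta> * N"
          unfolding \<delta>_def N_def QhS by (rule dual_ineq[OF k nrm])
        ultimately show ?thesis by (simp add: inner_diff_left)
      qed
      have ne: "{v \<bullet> proj S z | v. v \<in> S \<and> dual_norm nA v \<le> 1} \<noteq> {}"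
        using zS dual0 \<open>(0::real^'p) \<in> S\<close> by blast
      have "N = Sup {v \<bullet> proj S z | v. v \<in> S \<and> dual_norm nA v \<le> 1}"
        unfolding N_def QhS using dec2 zS by blast
      also have "\<dots> \<le> E + \<delta> * N"
        by (rule cSup_least[OF ne]) (use bnd in blast)
      finally show ?thesis by (simp add: algebra_simps)
    qed
    have Np: "N \<ge> 0" unfolding N_def using isn(2)[OF nrm] by simp
    have ap: "a \<ge> 0" unfolding a_def by simp
    have cs1: "w \<bullet> \<Phi> h \<le> \<epsilon> * a"
    proof -
      have "w \<bullet> \<Phi> h \<le> norm w * a" unfolding a_def by (rule norm_cauchy_schwarz)
      moreover have "norm w * a \<le> \<epsilon> * a" using wle ap by (rule mult_right_mono)
      ultimately show ?thesis by linarith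
    qed
    have cs2: "- (\<eta> \<bullet> \<Phi> h) \<le> n * a"
      using norm_cauchy_schwarz[of "-\<eta>" "\<Phi> h"] unfolding a_def n_def by simp
    define A where "A = \<epsilon> * (1 + c * n)"
    have main: "a\<^sup>2 / 2 + lam * E \<le> A * a"
    proof -
      have e1: "lam * nA u0 = lam * (\<alpha> \<bullet> z) - lam * (\<eta> \<bullet> \<Phi> h)" using nu0 by (simp add: right_diff_distrib)
      have e2: "lam * E = lam * nA z - lam * (\<alpha> \<bullet> z)" unfolding E_def by (simp add: right_diff_distrib)
      have e3: "lam * (- (\<eta> \<bullet> \<Phi> h)) = - (lam * (\<eta> \<bullet> \<Phi> h))" by simp
      have "a\<^sup>2 / 2 + lam * E \<le> w \<bullet> \<Phi> h + lam * (- (\<eta> \<bullet> \<Phi> h))"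
        using min1 sq e1 e2 e3 by linarith
      also have "\<dots> \<le> \<epsilon> * a + lam * (n * a)"
        using cs1 cs2 lamp by (intro add_mono mult_left_mono) auto
      also have "\<dots> = A * a" unfolding A_def lam_def by (simp add: algebra_simps)
      finally show ?thesis .
    qed
    have "0 \<le> (1 - \<delta>) * N" using dl Np by simp
    then have "0 \<le> E" using Elow by linarith
    then have Ep: "lam * E \<ge> 0" using lamp by simp
    have a2: "a \<le> 2 * A"
    proof (cases "a = 0")
      case True then show ?thesis unfolding A_def using eps cp by (simp add: n_def)
    next
      case False
      then have "a > 0" using ap by simp
      moreover have "a * a \<le> (2 * A) * a" using main Ep by (simp add: power2_eq_square)
      ultimately show ?thesis using mult_right_le_imp_le by blast
    qed
    have "lam * E \<le> A * a - a\<^sup>2 / 2" using main by simp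
    also have "\<dots> \<le> A\<^sup>2 / 2" 
    proof -
      have "(a - A)\<^sup>2 = a\<^sup>2 - 2 * (A * a) + A\<^sup>2" by (simp add: power2_eq_square algebra_simps)
      moreover have "0 \<le> (a - A)\<^sup>2" by simp
      ultimately show ?thesis by linarith
    qed
    finally have lE: "lam * E \<le> A\<^sup>2 / 2" .
    define D where "D = c * (1 - \<delta>)"
    have Dp: "D > 0" unfolding D_def using cp dl by simp
    have "\<epsilon> * (D * N) = lam * ((1 - \<delta>) * N)" unfolding D_def lam_def by simp
    also have "\<dots> \<le> lam * E" using Elow lamp by simp
    also have "\<dots> \<le> A\<^sup>2 / 2" by (rule lE)
    also have "\<dots> = \<epsilon> * (\<epsilon> * (1 + c * n)\<^sup>2 / 2)" unfolding A_def by (simp add: power2_eq_square)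
    finally have "D * N \<le> \<epsilon> * (1 + c * n)\<^sup>2 / 2" using eps by simp
    moreover have "(1 + c * n)\<^sup>2 \<le> 4 * (1 + c * n / 2)\<^sup>2"
    proof -
      have cn: "0 \<le> c * n" using cp unfolding n_def by simp
      have "(1 + c * n)\<^sup>2 \<le> (2 + c * n)\<^sup>2" using cn by (intro power_mono) auto
      also have "(2 + c * n)\<^sup>2 = 4 * (1 + c * n / 2)\<^sup>2" by (simp add: power2_eq_square algebra_simps)
      finally show ?thesis .
    qed
    ultimately have "D * N \<le> 2 * \<epsilon> * (1 + c * n / 2)\<^sup>2"
    proof -
      assume a1: "D * N \<le> \<epsilon> * (1 + c * n)\<^sup>2 / 2" and a2: "(1 + c * n)\<^sup>2 \<le> 4 * (1 + c * n / 2)\<^sup>2"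
      have "\<epsilon> * (1 + c * n)\<^sup>2 \<le> \<epsilon> * (4 * (1 + c * n / 2)\<^sup>2)"
        using a2 eps by (intro mult_left_mono) auto
      then show ?thesis using a1 by simp
    qed
    then have NN: "N \<le> 2 * \<epsilon> * (1 + c * n / 2)\<^sup>2 / D" by (subst pos_le_divide_eq[OF Dp]) (simp add: mult.commute)
    have "k * norm (Q h) \<le> N" unfolding N_def by (rule k(2))
    then have "norm (Q h) \<le> N / k" by (subst pos_le_divide_eq[OF k(1)]) (simp add: mult.commute)
    then have "B * norm h \<le> a + N / k" using Bb[of h] unfolding a_def by linarith
    then have "norm h \<le> (a + N / k) / B" by (subst pos_le_divide_eq[OF B(1)]) (simp add: mult.commute)
    also have "\<dots> = a / B + N / (B * k)" by (simp add: add_divide_distrib divide_divide_eq_left mult.commute)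
    also have "\<dots> \<le> (2 / B * (2 + c * n)) * \<epsilon> + (2 / (B * k) * (1 + c * n / 2)\<^sup>2 / D) * \<epsilon>"
    proof (rule add_mono)
      have cn: "0 \<le> c * n" using cp unfolding n_def by simp
      have "2 * A \<le> (2 + c * n) * (2 * \<epsilon>)" using eps cn unfolding A_def
        by (simp add: algebra_simps)
      then have "a \<le> (2 + c * n) * (2 * \<epsilon>)" using a2 by linarith
      then have "a / B \<le> ((2 + c * n) * (2 * \<epsilon>)) / B" using B(1) by (intro divide_right_mono) auto
      also have "\<dots> = (2 / B * (2 + c * n)) * \<epsilon>" by simp
      finally show "a / B \<le> (2 / B * (2 + c * n)) * \<epsilon>" .
      have "N / (B * k) \<le> (2 * \<epsilon> * (1 + c * n / 2)\<^sup>2 / D) / (B * k)"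
        using NN B(1) k(1) by (intro divide_right_mono) auto
      also have "\<dots> = (2 / (B * k) * (1 + c * n / 2)\<^sup>2 / D) * \<epsilon>" by (simp add: ac_simps)
      finally show "N / (B * k) \<le> (2 / (B * k) * (1 + c * n / 2)\<^sup>2 / D) * \<epsilon>" .
    qed
    finally have fin: "norm h \<le> (2 / B * (2 + c * n)) * \<epsilon> + (2 / (B * k) * (1 + c * n / 2)\<^sup>2 / D) * \<epsilon>" .
    have Deq: "D = c * (1 - dual_norm nA (proj (orthogonal_comp T0) \<alpha>))" unfolding D_def \<delta>_def S_def ..
    show "norm (xs - x0) \<le>
          (2 / B * (2 + c * norm \<eta>)
           + 2 / (B * k) * (1 + c * norm \<eta> / 2)\<^sup>2
                  / (c * (1 - dual_norm nA (proj (orthogonal_comp T0) \<alpha>)))) * \<epsilon>"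
      unfolding distrib_right using fin unfolding h_def n_def Deq .
  qed
  show ?thesis
    apply (rule exI[of _ "2 / B"])
    apply (rule conjI)
    using B(1) apply simp
    apply (rule exI[of _ "2 / (B * k)"])
    apply (rule conjI)
    using B(1) k(1) apply simp
    by (fact mainB)
qed

end
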